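(* Let $\Sigma$ be a normal rule set and $D$ a database, let $P$ be a prioritization of $\Sigma$ and $w$ a weight assignment on $\Sigma$. For each preference $\preceq\,\in\{\subseteq_P,\le,\le_P,\le_w\}$, every repair of $\Sigma$ w.r.t. $\preceq$ and $D$ is a repair of $\Sigma$ w.r.t. $\subseteq$ (set inclusion) and $D$.
   Context: A database is a finite set of atoms whose arguments are constants. A normal (existential) rule is a sentence $\forall\mathbf{x}\forall\mathbf{y}\,(\varphi(\mathbf{x},\mathbf{y})\rightarrow\exists\mathbf{z}\,\psi(\mathbf{x},\mathbf{z}))$ where $\varphi$ is a conjunction of literals (atoms or negated atoms), $\psi$ is a conjunction of atoms or $\bot$ (a constraint), and every universally quantified variable occurs in a positive conjunct of $\varphi$; a normal rule set is a finite set of such rules. Stable models of $D\cup\Sigma$ are the Gelfond–Lifschitz stable models of the normal logic program $D\cup\mathsf{sk}(\Sigma)$, where $\mathsf{sk}$ replaces each existential variable $z$ of a rule $r$ by $f^r_z(\mathbf{x})$ with a fresh function symbol and $\neg$ by default negation (constraints exclude models satisfying their bodies). For a preorder $\preceq$ on the power set of $\Sigma$, write $S\prec S'$ if $S\preceq S'$ and $S'\not\preceq S$; a subset $S\subseteq\Sigma$ is a repair w.r.t. $\preceq$ and $D$ if $D\cup S$ has a stable model and for every $S'\subseteq\Sigma$ with $S\prec S'$, $D\cup S'$ has no stable model. Preferences: $S\le S'$ iff $|S|\le|S'|$. A prioritization of $\Sigma$ is a tuple $P=\langle P_1,\dots,P_n\rangle$ where $\{P_1,\dots,P_n\}$ is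 a partition of $\Sigma$; $S\subseteq_P S'$ iff $S\cap P_i=S'\cap P_i$ for all $i$, or there is $i$ with $S\cap P_i\subsetneq S'\cap P_i$ and $S\cap P_j=S'\cap P_j$ for all $j<i$; $S\le_P S'$ iff $|S\cap P_i|=|S'\cap P_i|$ for all $i$, or there is $i$ with $|S\cap P_i|<|S'\cap P_i|$ and $|S\cap P_j|=|S'\cap P_j|$ for all $j<i$. A weight assignment is a function $w:\Sigma\to\mathbb{N}$, and $S\le_w S'$ iff $\sum_{r\in S}w(r)\le\sum_{r\in S'}w(r)$.
   Formalization: The weight assignment w is positive, with w(r) > 0 for every rule r in $\Sigma$, so w maps $\Sigma$ into the positive integers instead of $\mathbb{N}$. The statement above fails without it. *)

theory Defs
  imports Main
begin

datatype ('c,'v) rterm = Var 'v | Cst 'c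

type_synonym ('p,'c,'v) ratom = "'p \<times> ('c,'v) rterm list"

(* a rule: positive body literals, negated body atoms, head (Some atoms) or bottom (None) *)
datatype ('p,'c,'v) nrule =
  NRule (pos: "('p,'c,'v) ratom list") (neg: "('p,'c,'v) ratom list")
        (head: "('p,'c,'v) ratom list option")

fun tvars :: "('c,'v) rterm \<Rightarrow> 'v set" where
  "tvars (Var v) = {v}"
| "tvars (Cst c) = {}"

definition avars :: "('p,'c,'v) ratom \<Rightarrow> 'v set" where
  "avars a = \<Union> (tvars ` set (snd a))"

definition lvars :: "('p,'c,'v) ratom list \<Rightarrow> 'v set" where
  "lvars as = \<Union> (avars ` set as)"

definition body_vars :: "('p,'c,'v) nrule \<Rightarrow> 'v set" where
  "body_vars r = lvars (pos r) \<union> lvars (neg r)"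

definition head_vars :: "('p,'c,'v) nrule \<Rightarrow> 'v set" where
  "head_vars r = (case head r of None \<Rightarrow> {} | Some h \<Rightarrow> lvars h)"

definition frontier :: "('p,'c,'v) nrule \<Rightarrow> 'v set" where
  "frontier r = body_vars r \<inter> head_vars r"

(* normal rule: every universal variable occurs in a positive body atom;
   the head is a nonempty conjunction of atoms or bottom *)
definition normal_rule :: "('p,'c,'v) nrule \<Rightarrow> bool" where
  "normal_rule r \<longleftrightarrow> lvars (neg r) \<subseteq> lvars (pos r) \<and> head r \<noteq> Some []"

definition normal_rule_set :: "('p,'c,'v) nrule set \<Rightarrow> bool" where
  "normal_rule_set \<Sigma> \<longleftrightarrow> finite \<Sigma> \<and> (\<forall>r\<in>\<Sigma>. normal_rule r)"

definition database :: "('p \<times> 'c list) set \<Rightarrow> bool" where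
  "database D \<longleftrightarrow> finite D"

(* ground terms over constants and Skolem function symbols f^r_z *)
datatype ('c,'r,'v) gterm = GConst 'c | GSk 'r 'v "('c,'r,'v) gterm list"

type_synonym ('p,'c,'v) gatom = "'p \<times> ('c, ('p,'c,'v) nrule, 'v) gterm list"

(* ground instance of a term of rule r (Skolemised) under a substitution sigma:
   an existential variable z becomes f^r_z(x) with x the frontier variables *)
fun inst_term :: "('p,'c,'v::linorder) nrule \<Rightarrow> ('v \<Rightarrow> ('c, ('p,'c,'v) nrule, 'v) gterm)
     \<Rightarrow> ('c,'v) rterm \<Rightarrow> ('c, ('p,'c,'v) nrule, 'v) gterm" where
  "inst_term r \<sigma> (Var v) =
     (if v \<in> body_vars r then \<sigma> v
      else GSk r v (map \<sigma> (sorted_list_of_set (frontier r))))"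
| "inst_term r \<sigma> (Cst c) = GConst c"

definition inst_atom :: "('p,'c,'v::linorder) nrule \<Rightarrow> ('v \<Rightarrow> ('c, ('p,'c,'v) nrule, 'v) gterm)
     \<Rightarrow> ('p,'c,'v) ratom \<Rightarrow> ('p,'c,'v) gatom" where
  "inst_atom r \<sigma> a = (fst a, map (inst_term r \<sigma>) (snd a))"

definition inst_set :: "('p,'c,'v::linorder) nrule \<Rightarrow> ('v \<Rightarrow> ('c, ('p,'c,'v) nrule, 'v) gterm)
     \<Rightarrow> ('p,'c,'v) ratom list \<Rightarrow> ('p,'c,'v) gatom set" where
  "inst_set r \<sigma> as = inst_atom r \<sigma> ` set as"

definition db_atom :: "'p \<times> 'c list \<Rightarrow> ('p,'c,'v) gatom" where
  "db_atom a = (fst a, map GConst (snd a))"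

(* I is closed under the Gelfond-Lifschitz reduct of D \<union> sk(S) w.r.t. M *)
definition reduct_closed :: "('p \<times> 'c list) set \<Rightarrow> ('p,'c,'v::linorder) nrule set
     \<Rightarrow> ('p,'c,'v) gatom set \<Rightarrow> ('p,'c,'v) gatom set \<Rightarrow> bool" where
  "reduct_closed D S M I \<longleftrightarrow> db_atom ` D \<subseteq> I \<and>
     (\<forall>r\<in>S. \<forall>\<sigma> h. head r = Some h \<longrightarrow> inst_set r \<sigma> (neg r) \<inter> M = {}
        \<longrightarrow> inst_set r \<sigma> (pos r) \<subseteq> I \<longrightarrow> inst_set r \<sigma> h \<subseteq> I)"

(* least model of the (constraint-free part of the) reduct *)
definition reduct_least_model :: "('p \<times> 'c list) set \<Rightarrow> ('p,'c,'v::linorder) nrule set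
     \<Rightarrow> ('p,'c,'v) gatom set \<Rightarrow> ('p,'c,'v) gatom set" where
  "reduct_least_model D S M = \<Inter> {I. reduct_closed D S M I}"

definition stable_model :: "('p \<times> 'c list) set \<Rightarrow> ('p,'c,'v::linorder) nrule set
     \<Rightarrow> ('p,'c,'v) gatom set \<Rightarrow> bool" where
  "stable_model D S M \<longleftrightarrow> M = reduct_least_model D S M \<and>
     (\<forall>r\<in>S. \<forall>\<sigma>. head r = None \<longrightarrow>
        \<not> (inst_set r \<sigma> (pos r) \<subseteq> M \<and> inst_set r \<sigma> (neg r) \<inter> M = {}))"

definition has_stable_model :: "('p \<times> 'c list) set \<Rightarrow> ('p,'c,'v::linorder) nrule set \<Rightarrow> bool" where
  "has_stable_model D S \<longleftrightarrow> (\<exists>M. stable_model D S M)"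

definition strict_pref :: "('a set \<Rightarrow> 'a set \<Rightarrow> bool) \<Rightarrow> 'a set \<Rightarrow> 'a set \<Rightarrow> bool" where
  "strict_pref pref S S' \<longleftrightarrow> pref S S' \<and> \<not> pref S' S"

definition repair :: "(('p,'c,'v::linorder) nrule set \<Rightarrow> ('p,'c,'v) nrule set \<Rightarrow> bool)
     \<Rightarrow> ('p,'c,'v) nrule set \<Rightarrow> ('p \<times> 'c list) set \<Rightarrow> ('p,'c,'v) nrule set \<Rightarrow> bool" where
  "repair pref \<Sigma> D S \<longleftrightarrow> S \<subseteq> \<Sigma> \<and> has_stable_model D S \<and>
     (\<forall>S'. S' \<subseteq> \<Sigma> \<longrightarrow> strict_pref pref S S' \<longrightarrow> \<not> has_stable_model D S')"

definition card_le :: "'a set \<Rightarrow> 'a set \<Rightarrow> bool" where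
  "card_le S S' \<longleftrightarrow> card S \<le> card S'"

(* prioritisation <P_1,...,P_n>, as a list indexed 0..n-1, whose parts partition Sigma *)
definition prioritization :: "'a set \<Rightarrow> 'a set list \<Rightarrow> bool" where
  "prioritization \<Sigma> P \<longleftrightarrow> (\<forall>i<length P. P ! i \<noteq> {}) \<and>
     (\<forall>i<length P. \<forall>j<length P. i \<noteq> j \<longrightarrow> P ! i \<inter> P ! j = {}) \<and>
     \<Union> (set P) = \<Sigma>"

definition prio_subset :: "'a set list \<Rightarrow> 'a set \<Rightarrow> 'a set \<Rightarrow> bool" where
  "prio_subset P S S' \<longleftrightarrow> (\<forall>i<length P. S \<inter> P ! i = S' \<inter> P ! i) \<or>
     (\<exists>i<length P. S \<inter> P ! i \<subset> S' \<inter> P ! i \<and> (\<forall>j<i. S \<inter> P ! j = S' \<inter> P ! j))"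

definition prio_card :: "'a set list \<Rightarrow> 'a set \<Rightarrow> 'a set \<Rightarrow> bool" where
  "prio_card P S S' \<longleftrightarrow> (\<forall>i<length P. card (S \<inter> P ! i) = card (S' \<inter> P ! i)) \<or>
     (\<exists>i<length P. card (S \<inter> P ! i) < card (S' \<inter> P ! i) \<and>
        (\<forall>j<i. card (S \<inter> P ! j) = card (S' \<inter> P ! j)))"

definition weight_le :: "('a \<Rightarrow> nat) \<Rightarrow> 'a set \<Rightarrow> 'a set \<Rightarrow> bool" where
  "weight_le w S S' \<longleftrightarrow> sum w S \<le> sum w S'"

end

theory Submission
  imports Defs
begin

lemma first_diff:
  assumes "S \<subset> S'" "S' \<subseteq> \<Union> (set P)"
  obtains i where "i < length P" "S \<inter> P ! i \<subset> S' \<inter> P ! i"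
    "\<forall>j<i. S \<inter> P ! j = S' \<inter> P ! j"
proof -
  obtain x where x: "x \<in> S'" "x \<notin> S" using assms(1) by blast
  then obtain k where k: "k < length P" "x \<in> P ! k" using assms(2)
    by (metis UnionE in_set_conv_nth subsetD)
  have ex: "\<exists>k. k < length P \<and> S \<inter> P ! k \<noteq> S' \<inter> P ! k" using k x by blast
  define i where "i = (LEAST k. k < length P \<and> S \<inter> P ! k \<noteq> S' \<inter> P ! k)"
  have i: "i < length P \<and> S \<inter> P ! i \<noteq> S' \<inter> P ! i"
    unfolding i_def by (rule LeastI_ex[OF ex])
  have "\<forall>j<i. S \<inter> P ! j = S' \<inter> P ! j"
  proof (intro allI impI)
    fix j assume "j < i"
    then have "\<not> (j < length P \<and> S \<inter> P ! j \<noteq> S' \<inter> P ! j)"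
      unfolding i_def by (rule not_less_Least)
    then show "S \<inter> P ! j = S' \<inter> P ! j" using \<open>j < i\<close> i by auto
  qed
  moreover have "S \<inter> P ! i \<subset> S' \<inter> P ! i" using i assms(1) by blast
  ultimately show ?thesis using that i by blast
qed

lemma strict_all:
  fixes \<Sigma> :: "'a set"
  assumes fin: "finite \<Sigma>" and pr: "prioritization \<Sigma> P" and wpos: "\<forall>r\<in>\<Sigma>. w r > 0"
    and pref: "pref \<in> {prio_subset P, card_le, prio_card P, weight_le w}"
    and sub: "S \<subset> S'" "S' \<subseteq> \<Sigma>"
  shows "strict_pref pref S S'"
proof -
  have U: "S' \<subseteq> \<Union> (set P)" using pr sub unfolding prioritization_def by blast
  have finS': "finite S'" using fin sub finite_subset by blast
  have finS: "finite S" using finS' sub finite_subset by blast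
  have fi: "\<And>i. finite (S' \<inter> P ! i)" using finS' by blast
  obtain i where i: "i < length P" "S \<inter> P ! i \<subset> S' \<inter> P ! i"
    "\<forall>j<i. S \<inter> P ! j = S' \<inter> P ! j" using first_diff[OF sub(1) U] by blast
  have ci: "card (S \<inter> P ! i) < card (S' \<inter> P ! i)" using i(2) fi psubset_card_mono by blast
  have mono: "\<And>k. card (S \<inter> P ! k) \<le> card (S' \<inter> P ! k)"
    using fi sub(1) by (meson Int_mono card_mono order_refl psubset_imp_subset)
  consider "pref = prio_subset P" | "pref = card_le" | "pref = prio_card P" | "pref = weight_le w"
    using pref by blast
  then show ?thesis
  proof cases
    case 1
    have a: "prio_subset P S S'" unfolding prio_subset_def using i by blast
    have b: "\<not> prio_subset P S' S" unfolding prio_subset_def using i sub(1) by blast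
    show ?thesis using a b 1 unfolding strict_pref_def by simp
  next
    case 2
    have "card S < card S'" using sub finS' psubset_card_mono by blast
    then show ?thesis using 2 unfolding strict_pref_def card_le_def by simp
  next
    case 3
    have a: "prio_card P S S'" unfolding prio_card_def using i ci by auto
    have b: "\<not> prio_card P S' S" unfolding prio_card_def using i ci mono
      by (metis leD nat_less_le)
    show ?thesis using a b 3 unfolding strict_pref_def by simp
  next
    case 4
    obtain x where x: "x \<in> S'" "x \<notin> S" using sub(1) by blast
    have "sum w S' = sum w (S' - S) + sum w S"
      using finS' sub(1) by (metis psubset_imp_subset sum.subset_diff)
    moreover have "sum w (S' - S) \<ge> w x" using finS' x
      by (metis Diff_iff finite_Diff member_le_sum zero_le)
    moreover have "w x > 0" using wpos x sub by blast
    ultimately have "sum w S < sum w S'" by linarith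
    then show ?thesis using 4 unfolding strict_pref_def weight_le_def by simp
  qed
qed

theorem theorem1:
  fixes \<Sigma> :: "('p,'c,'v::linorder) nrule set"
    and D :: "('p \<times> 'c list) set"
    and P :: "('p,'c,'v) nrule set list"
    and w :: "('p,'c,'v) nrule \<Rightarrow> nat"
    and pref :: "('p,'c,'v) nrule set \<Rightarrow> ('p,'c,'v) nrule set \<Rightarrow> bool"
    and S :: "('p,'c,'v) nrule set"
  assumes "normal_rule_set \<Sigma>"
    and "database D"
    and "prioritization \<Sigma> P"
    and "\<forall>r\<in>\<Sigma>. w r > 0"
    and "pref \<in> {prio_subset P, card_le, prio_card P, weight_le w}"
    and "repair pref \<Sigma> D S"
  shows "repair (\<subseteq>) \<Sigma> D S"
proof -
  have fin: "finite \<Sigma>" using assms(1) unfolding normal_rule_set_def by blast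
  show ?thesis unfolding repair_def
  proof (intro conjI allI impI)
    show "S \<subseteq> \<Sigma>" "has_stable_model D S" using assms(6) unfolding repair_def by auto
  next
    fix S' assume S': "S' \<subseteq> \<Sigma>" "strict_pref (\<subseteq>) S S'"
    then have "S \<subset> S'" unfolding strict_pref_def by blast
    then have "strict_pref pref S S'"
      using strict_all[OF fin assms(3) assms(4) assms(5)] S'(1) by blast
    then show "\<not> has_stable_model D S'" using assms(6) S'(1) unfolding repair_def by blast
  qed
qed

end
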